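(* Let $\mathsf G=(\mathsf V,\mathsf E)$ be a finite connected graph without loops or multiple edges, with discrete Laplacian $\mathcal L=\mathcal I\mathcal I^T$. Then the semigroup $(e^{-t\mathcal L^2})_{t\ge0}$ is eventually $\ell^\infty$-contractive, hence eventually sub-Markovian: there exists $t_0>0$ such that for all $t\ge t_0$ the matrix $e^{-t\mathcal L^2}$ is positive (maps vectors with nonnegative entries to vectors with nonnegative entries) and satisfies $\|e^{-t\mathcal L^2}f\|_\infty\le\|f\|_\infty$ for all $f$.
   Context: $V=|\mathsf V|$ and functions on vertices are vectors in $\mathbb C^V$. After fixing an arbitrary orientation of the edges, the incidence matrix $\mathcal I\in\mathbb R^{V\times E}$ has entries $\iota_{\mathsf v\mathsf e}=-1$ if $\mathsf v$ is the initial endpoint of $\mathsf e$, $+1$ if $\mathsf v$ is the terminal endpoint of $\mathsf e$, and $0$ otherwise; $\mathcal L=\mathcal I\mathcal I^T$. *)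

theory Defs
  imports Complex_Main
begin

definition simple_graph :: "('v \<Rightarrow> 'v \<Rightarrow> bool) \<Rightarrow> bool" where
  "simple_graph E \<longleftrightarrow> (\<forall>u v. E u v \<longrightarrow> E v u) \<and> (\<forall>v. \<not> E v v)"

definition connected_graph :: "('v \<Rightarrow> 'v \<Rightarrow> bool) \<Rightarrow> bool" where
  "connected_graph E \<longleftrightarrow> (\<forall>u v. E\<^sup>*\<^sup>* u v)"

definition orientation :: "('v \<Rightarrow> 'v \<Rightarrow> bool) \<Rightarrow> ('v \<times> 'v) set \<Rightarrow> bool" where
  "orientation E Eo \<longleftrightarrow> (\<forall>u v. (u, v) \<in> Eo \<longrightarrow> E u v) \<and>
     (\<forall>u v. E u v \<longrightarrow> ((u, v) \<in> Eo \<longleftrightarrow> (v, u) \<notin> Eo))"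

definition incidence :: "'v \<Rightarrow> 'v \<times> 'v \<Rightarrow> real" where
  "incidence v e = (if v = fst e then -1 else if v = snd e then 1 else 0)"

definition laplacian :: "('v \<times> 'v) set \<Rightarrow> 'v \<Rightarrow> 'v \<Rightarrow> real" where
  "laplacian Eo v w = (\<Sum>e\<in>Eo. incidence v e * incidence w e)"

definition mat_mult :: "('v::finite \<Rightarrow> 'v \<Rightarrow> real) \<Rightarrow> ('v \<Rightarrow> 'v \<Rightarrow> real) \<Rightarrow> 'v \<Rightarrow> 'v \<Rightarrow> real" where
  "mat_mult A B i j = (\<Sum>k\<in>UNIV. A i k * B k j)"

fun mat_pow :: "('v::finite \<Rightarrow> 'v \<Rightarrow> real) \<Rightarrow> nat \<Rightarrow> 'v \<Rightarrow> 'v \<Rightarrow> real" where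
  "mat_pow A 0 = (\<lambda>i j. if i = j then 1 else 0)"
| "mat_pow A (Suc n) = mat_mult A (mat_pow A n)"

definition mat_exp :: "('v::finite \<Rightarrow> 'v \<Rightarrow> real) \<Rightarrow> 'v \<Rightarrow> 'v \<Rightarrow> real" where
  "mat_exp A i j = (\<Sum>k. mat_pow A k i j / fact k)"

definition mat_vec :: "('v::finite \<Rightarrow> 'v \<Rightarrow> real) \<Rightarrow> ('v \<Rightarrow> complex) \<Rightarrow> 'v \<Rightarrow> complex" where
  "mat_vec A f i = (\<Sum>j\<in>UNIV. complex_of_real (A i j) * f j)"

definition sup_norm :: "('v::finite \<Rightarrow> complex) \<Rightarrow> real" where
  "sup_norm f = Max (range (\<lambda>v. cmod (f v)))"

end

theory Submission
  imports Defs "HOL-Analysis.Analysis"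
begin


lemma inc_x:
  fixes x :: "'v::finite \<Rightarrow> real"
  assumes "fst e \<noteq> snd e"
  shows "(\<Sum>w\<in>UNIV. incidence w e * x w) = x (snd e) - x (fst e)"
proof -
  have "\<And>w. incidence w e * x w = (if w = snd e then x w else 0) - (if w = fst e then x w else 0)"
    using assms by (auto simp: incidence_def)
  then show ?thesis by (simp add: sum_subtractf)
qed

lemma mat_pow_bound:
  fixes C :: "'v::finite \<Rightarrow> 'v \<Rightarrow> real"
  shows "\<bar>mat_pow C k i j\<bar> \<le> (\<Sum>a\<in>UNIV. \<Sum>b\<in>UNIV. \<bar>C a b\<bar>) ^ k"
proof (induction k arbitrary: i j)
  case 0 then show ?case by simp
next
  case (Suc k)
  let ?R = "(\<Sum>a\<in>UNIV. \<Sum>b\<in>UNIV. \<bar>C a b\<bar>)"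
  have "\<bar>mat_pow C (Suc k) i j\<bar> = \<bar>\<Sum>l\<in>UNIV. C i l * mat_pow C k l j\<bar>"
    by (simp add: mat_mult_def)
  also have "\<dots> \<le> (\<Sum>l\<in>UNIV. \<bar>C i l * mat_pow C k l j\<bar>)" by (rule sum_abs)
  also have "\<dots> \<le> (\<Sum>l\<in>UNIV. \<bar>C i l\<bar> * ?R ^ k)"
    by (rule sum_mono) (simp add: abs_mult mult_left_mono Suc.IH)
  also have "\<dots> = (\<Sum>l\<in>UNIV. \<bar>C i l\<bar>) * ?R ^ k" by (simp add: sum_distrib_right)
  also have "\<dots> \<le> ?R * ?R ^ k"
  proof (rule mult_right_mono)
    show "(\<Sum>l\<in>UNIV. \<bar>C i l\<bar>) \<le> ?R"
      by (rule member_le_sum[of i UNIV "\<lambda>a. \<Sum>b\<in>UNIV. \<bar>C a b\<bar>", simplified])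
    show "0 \<le> ?R ^ k" by (simp add: sum_nonneg)
  qed
  finally show ?case by simp
qed

lemma summable_entry:
  fixes C :: "'v::finite \<Rightarrow> 'v \<Rightarrow> real"
  shows "summable (\<lambda>k. mat_pow C k i j / fact k * r ^ k)"
proof -
  let ?R = "(\<Sum>a\<in>UNIV. \<Sum>b\<in>UNIV. \<bar>C a b\<bar>)"
  show ?thesis
  proof (rule summable_comparison_test'[OF summable_exp[of "?R * \<bar>r\<bar>"]])
    fix k :: nat
    have "norm (mat_pow C k i j / fact k * r ^ k) = \<bar>mat_pow C k i j\<bar> * \<bar>r\<bar> ^ k / fact k"
      by (simp add: abs_mult power_abs)
    also have "\<dots> \<le> ?R ^ k * \<bar>r\<bar> ^ k / fact k"
      by (intro divide_right_mono mult_right_mono mat_pow_bound) auto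
    also have "\<dots> = inverse (fact k) * (?R * \<bar>r\<bar>) ^ k"
      by (simp add: power_mult_distrib field_simps)
    finally show "norm (mat_pow C k i j / fact k * r ^ k) \<le> inverse (fact k) * (?R * \<bar>r\<bar>) ^ k" .
  qed
qed

lemma summable_entry1:
  fixes C :: "'v::finite \<Rightarrow> 'v \<Rightarrow> real"
  shows "summable (\<lambda>k. mat_pow C k i j / fact k)"
  using summable_entry[of C i j 1] by simp

lemma mat_pow_scale:
  fixes C :: "'v::finite \<Rightarrow> 'v \<Rightarrow> real"
  shows "mat_pow (\<lambda>a b. s * C a b) k i j = s ^ k * mat_pow C k i j"
  by (induction k arbitrary: i j) (simp_all add: mat_mult_def sum_distrib_left mult_ac)

lemma mat_pow_rowsum:
  fixes C :: "'v::finite \<Rightarrow> 'v \<Rightarrow> real"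
  assumes "\<And>i. (\<Sum>j\<in>UNIV. C i j) = 0"
  shows "(\<Sum>j\<in>UNIV. mat_pow C k i j) = (if k = 0 then 1 else 0)"
proof (induction k arbitrary: i)
  case 0 then show ?case by simp
next
  case (Suc k)
  have "(\<Sum>j\<in>UNIV. mat_pow C (Suc k) i j) = (\<Sum>l\<in>UNIV. C i l * (\<Sum>j\<in>UNIV. mat_pow C k l j))"
    by (simp add: mat_mult_def sum_distrib_left) (rule sum.swap)
  also have "\<dots> = 0" using assms by (simp add: Suc.IH)
  finally show ?case by simp
qed

lemma mat_pow_colsum:
  fixes C :: "'v::finite \<Rightarrow> 'v \<Rightarrow> real"
  assumes "\<And>j. (\<Sum>i\<in>UNIV. C i j) = 0"
  shows "(\<Sum>i\<in>UNIV. mat_pow C (Suc k) i j) = 0"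
proof -
  have "(\<Sum>i\<in>UNIV. mat_pow C (Suc k) i j) = (\<Sum>l\<in>UNIV. (\<Sum>i\<in>UNIV. C i l) * mat_pow C k l j)"
    by (simp add: mat_mult_def sum_distrib_right) (rule sum.swap)
  also have "\<dots> = 0" using assms by simp
  finally show ?thesis .
qed

lemma mat_exp_rowsum:
  fixes C :: "'v::finite \<Rightarrow> 'v \<Rightarrow> real"
  assumes "\<And>i. (\<Sum>j\<in>UNIV. C i j) = 0"
  shows "(\<Sum>j\<in>UNIV. mat_exp C i j) = 1"
proof -
  have "(\<Sum>j\<in>UNIV. mat_exp C i j) = (\<Sum>k. \<Sum>j\<in>UNIV. mat_pow C k i j / fact k)"
    unfolding mat_exp_def by (rule suminf_sum[symmetric]) (rule summable_entry1)
  also have "\<dots> = (\<Sum>k. if k = 0 then 1 else 0)"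
    by (simp add: sum_divide_distrib[symmetric] mat_pow_rowsum[OF assms])
       (intro arg_cong[where f=suminf] ext, simp)
  also have "\<dots> = 1" using sums_single[of 0 "\<lambda>_. 1::real"] by (simp add: sums_iff)
  finally show ?thesis .
qed

lemma mat_pow_vec_Suc:
  fixes C :: "'v::finite \<Rightarrow> 'v \<Rightarrow> real"
  shows "(\<Sum>j\<in>UNIV. mat_pow C (Suc k) i j * x j) = (\<Sum>l\<in>UNIV. C i l * (\<Sum>j\<in>UNIV. mat_pow C k l j * x j))"
  by (simp add: mat_mult_def sum_distrib_left sum_distrib_right mult_ac) (rule sum.swap)

locale lap =
  fixes E :: "'v::finite \<Rightarrow> 'v \<Rightarrow> bool" and Eo :: "('v \<times> 'v) set"
  assumes sg: "simple_graph E" and cg: "connected_graph E" and og: "orientation E Eo"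
begin

abbreviation "L \<equiv> laplacian Eo"

lemma finEo: "finite Eo" by simp

lemma Eo_ne: "e \<in> Eo \<Longrightarrow> fst e \<noteq> snd e"
  using sg og unfolding simple_graph_def orientation_def by (metis prod.collapse)

lemma L_sym: "L i j = L j i"
  unfolding laplacian_def by (simp add: mult.commute)

lemma L_row: "(\<Sum>j\<in>UNIV. L i j) = 0"
proof -
  have "(\<Sum>j\<in>UNIV. L i j) = (\<Sum>e\<in>Eo. incidence i e * (\<Sum>j\<in>UNIV. incidence j e * 1))"
    unfolding laplacian_def by (simp add: sum_distrib_left) (rule sum.swap)
  also have "\<dots> = 0" by (rule sum.neutral) (use inc_x[of _ "\<lambda>_. 1"] Eo_ne in auto)
  finally show ?thesis .
qed

lemma L_col: "(\<Sum>i\<in>UNIV. L i j) = 0"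
  using L_row[of j] by (simp add: L_sym)

lemma L_form: "(\<Sum>i\<in>UNIV. x i * (\<Sum>j\<in>UNIV. L i j * x j)) = (\<Sum>e\<in>Eo. (x (snd e) - x (fst e))^2)"
proof -
  have "(\<Sum>i\<in>UNIV. x i * (\<Sum>j\<in>UNIV. L i j * x j))
      = (\<Sum>i\<in>UNIV. \<Sum>j\<in>UNIV. \<Sum>e\<in>Eo. (incidence i e * x i) * (incidence j e * x j))"
    unfolding laplacian_def sum_distrib_left sum_distrib_right by (simp add: mult_ac)
  also have "\<dots> = (\<Sum>i\<in>UNIV. \<Sum>e\<in>Eo. \<Sum>j\<in>UNIV. (incidence i e * x i) * (incidence j e * x j))"
    by (rule sum.cong[OF refl], rule sum.swap)
  also have "\<dots> = (\<Sum>e\<in>Eo. \<Sum>i\<in>UNIV. \<Sum>j\<in>UNIV. (incidence i e * x i) * (incidence j e * x j))"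
    by (rule sum.swap)
  also have "\<dots> = (\<Sum>e\<in>Eo. (\<Sum>i\<in>UNIV. incidence i e * x i) * (\<Sum>j\<in>UNIV. incidence j e * x j))"
    by (simp add: sum_product)
  also have "\<dots> = (\<Sum>e\<in>Eo. (x (snd e) - x (fst e))^2)"
    using Eo_ne by (simp add: inc_x power2_eq_square)
  finally show ?thesis .
qed

lemma L_ker:
  assumes "\<forall>i. (\<Sum>j\<in>UNIV. L i j * x j) = 0"
  shows "x u = x v"
proof -
  have "(\<Sum>e\<in>Eo. (x (snd e) - x (fst e))^2) = 0"
    using L_form[of x] assms by simp
  then have eq: "\<And>e. e \<in> Eo \<Longrightarrow> x (snd e) = x (fst e)"
    using sum_nonneg_eq_0_iff[OF finEo, of "\<lambda>e. (x (snd e) - x (fst e))^2"] by auto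
  have step: "x a = x b" if "E a b" for a b
  proof (cases "(a,b) \<in> Eo")
    case True then show ?thesis using eq[of "(a,b)"] by simp
  next
    case False
    then have "(b,a) \<in> Eo" using og that unfolding orientation_def by blast
    then show ?thesis using eq[of "(b,a)"] by simp
  qed
  have "E\<^sup>*\<^sup>* u v" using cg unfolding connected_graph_def by blast
  then show ?thesis
    by (induction rule: rtranclp_induct) (auto dest: step)
qed


abbreviation "A \<equiv> mat_pow L 2"

lemma A_eq: "A i j = (\<Sum>k\<in>UNIV. L i k * L k j)"
proof -
  have "\<And>k. (\<Sum>l\<in>UNIV. L k l * (if l = j then 1 else 0)) = L k j"
  proof -
    fix k
    have "\<And>l. L k l * (if l = j then 1 else 0) = (if l = j then L k l else 0)" by simp
    then show "(\<Sum>l\<in>UNIV. L k l * (if l = j then 1 else 0)) = L k j" by simp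
  qed
  then show ?thesis by (simp add: numeral_2_eq_2 mat_mult_def)
qed

lemma A_row: "(\<Sum>j\<in>UNIV. A i j) = 0"
proof -
  have "(\<Sum>j\<in>UNIV. A i j) = (\<Sum>k\<in>UNIV. L i k * (\<Sum>j\<in>UNIV. L k j))"
    by (simp add: A_eq sum_distrib_left) (rule sum.swap)
  then show ?thesis by (simp add: L_row)
qed

lemma A_col: "(\<Sum>i\<in>UNIV. A i j) = 0"
proof -
  have "(\<Sum>i\<in>UNIV. A i j) = (\<Sum>k\<in>UNIV. (\<Sum>i\<in>UNIV. L i k) * L k j)"
    by (simp add: A_eq sum_distrib_right) (rule sum.swap)
  then show ?thesis by (simp add: L_col)
qed

lemma A_vec: "(\<Sum>l\<in>UNIV. A i l * y l) = (\<Sum>k\<in>UNIV. L i k * (\<Sum>l\<in>UNIV. L k l * y l))"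
  by (simp add: A_eq sum_distrib_left sum_distrib_right mult_ac) (rule sum.swap)

lemma A_form: "(\<Sum>i\<in>UNIV. y i * (\<Sum>l\<in>UNIV. A i l * y l)) = (\<Sum>k\<in>UNIV. (\<Sum>l\<in>UNIV. L k l * y l)^2)"
proof -
  define z where "z k = (\<Sum>l\<in>UNIV. L k l * y l)" for k
  have "(\<Sum>i\<in>UNIV. y i * (\<Sum>l\<in>UNIV. A i l * y l)) = (\<Sum>i\<in>UNIV. \<Sum>k\<in>UNIV. y i * L i k * z k)"
    by (simp only: A_vec z_def) (simp add: sum_distrib_left mult_ac)
  also have "\<dots> = (\<Sum>k\<in>UNIV. \<Sum>i\<in>UNIV. y i * L i k * z k)" by (rule sum.swap)
  also have "\<dots> = (\<Sum>k\<in>UNIV. z k * z k)"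
    by (simp add: z_def sum_distrib_right sum_distrib_left L_sym[of _ k for k] mult_ac)
  finally show ?thesis by (simp add: z_def power2_eq_square)
qed

lemma lower: "\<exists>c>0. \<forall>x. (\<Sum>i\<in>UNIV. x i) = 0 \<longrightarrow>
   c * (\<Sum>i\<in>UNIV. (x i)^2) \<le> (\<Sum>i\<in>UNIV. (\<Sum>j\<in>UNIV. L i j * x j)^2)"
proof -
  define f where "f = (\<lambda>z::real^'v. \<chi> i. \<Sum>j\<in>UNIV. L i j * z$j)"
  define one :: "real^'v" where "one = (\<chi> i. 1)"
  have lin: "linear f" unfolding f_def
    by (auto simp: linear_iff vec_eq_iff sum.distrib sum_distrib_left algebra_simps)
  then have bl: "bounded_linear f" using linear_conv_bounded_linear by blast
  have inj: "\<forall>z\<in>{z. inner one z = 0}. f z = 0 \<longrightarrow> z = 0"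
  proof (intro ballI impI)
    fix z assume zS: "z \<in> {z. inner one z = 0}" and fz: "f z = 0"
    have "\<forall>i. (\<Sum>j\<in>UNIV. L i j * z$j) = 0" using fz unfolding f_def by (simp add: vec_eq_iff)
    then have const: "\<And>u v. z$u = z$v" using L_ker[of "\<lambda>j. z$j"] by blast
    have "(\<Sum>i\<in>UNIV. z$i) = 0" using zS by (simp add: one_def inner_vec_def)
    then have "\<And>a. of_nat CARD('v) * z$a = 0"
    proof -
      fix a :: 'v
      have "(\<Sum>i\<in>UNIV. z$i) = (\<Sum>i\<in>(UNIV::'v set). z$a)" by (rule sum.cong, simp, rule const)
      then show "of_nat CARD('v) * z$a = 0" using \<open>(\<Sum>i\<in>UNIV. z$i) = 0\<close> by simp
    qed
    then show "z = 0" by (simp add: vec_eq_iff)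
  qed
  obtain e where e: "e > 0" "\<forall>z\<in>{z. inner one z = 0}. e * norm z \<le> norm (f z)"
    using injective_imp_isometric[OF closed_hyperplane subspace_hyperplane bl inj] by blast
  show ?thesis
  proof (intro exI[of _ "e^2"] conjI allI impI)
    show "0 < e^2" using e by simp
    fix x :: "'v \<Rightarrow> real" assume sx: "(\<Sum>i\<in>UNIV. x i) = 0"
    define z where "z = (\<chi> i. x i)"
    have "inner one z = 0" using sx by (simp add: one_def z_def inner_vec_def)
    then have "e * norm z \<le> norm (f z)" using e by blast
    then have "(e * norm z)^2 \<le> (norm (f z))^2" using e by (intro power_mono) auto
    moreover have "(norm z)^2 = (\<Sum>i\<in>UNIV. (x i)^2)"
      by (simp only: power2_norm_eq_inner) (simp add: inner_vec_def z_def power2_eq_square)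
    moreover have "(norm (f z))^2 = (\<Sum>i\<in>UNIV. (\<Sum>j\<in>UNIV. L i j * x j)^2)"
      by (simp only: power2_norm_eq_inner) (simp add: inner_vec_def z_def f_def power2_eq_square)
    ultimately show "e^2 * (\<Sum>i\<in>UNIV. (x i)^2) \<le> (\<Sum>i\<in>UNIV. (\<Sum>j\<in>UNIV. L i j * x j)^2)"
      by (simp add: power_mult_distrib)
  qed
qed

end


definition yv :: "('v::finite \<Rightarrow> 'v \<Rightarrow> real) \<Rightarrow> ('v \<Rightarrow> real) \<Rightarrow> real \<Rightarrow> 'v \<Rightarrow> real" where
  "yv D x t i = (\<Sum>j\<in>UNIV. mat_exp (\<lambda>a b. t * D a b) i j * x j)"

definition cf :: "('v::finite \<Rightarrow> 'v \<Rightarrow> real) \<Rightarrow> ('v \<Rightarrow> real) \<Rightarrow> nat \<Rightarrow> 'v \<Rightarrow> real" where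
  "cf D x k i = (\<Sum>j\<in>UNIV. mat_pow D k i j * x j) / fact k"

lemma cf_term: "cf D x k i * t^k = (\<Sum>j\<in>UNIV. mat_pow D k i j / fact k * t^k * x j)"
  unfolding cf_def sum_divide_distrib sum_distrib_right by (rule sum.cong) (simp_all add: mult_ac)

lemma summable_cf: "summable (\<lambda>k. cf D x k i * t^k)"
  unfolding cf_term
  by (rule summable_sum, rule summable_mult2, rule summable_entry)

lemma yv_series: "yv D x t i = (\<Sum>k. cf D x k i * t^k)"
proof -
  have "yv D x t i = (\<Sum>j\<in>UNIV. \<Sum>k. mat_pow D k i j / fact k * t^k * x j)"
    unfolding yv_def mat_exp_def mat_pow_scale
  proof (rule sum.cong[OF refl])
    fix j
    have e: "(\<lambda>k. t ^ k * mat_pow D k i j / fact k) = (\<lambda>k. mat_pow D k i j / fact k * t^k)"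
      by (simp add: fun_eq_iff mult_ac)
    show "(\<Sum>k. t ^ k * mat_pow D k i j / fact k) * x j = (\<Sum>k. mat_pow D k i j / fact k * t ^ k * x j)"
      unfolding e by (rule suminf_mult2[OF summable_entry])
  qed
  also have "\<dots> = (\<Sum>k. \<Sum>j\<in>UNIV. mat_pow D k i j / fact k * t^k * x j)"
    by (rule suminf_sum[symmetric], rule summable_mult2, rule summable_entry)
  finally show ?thesis unfolding cf_term .
qed

lemma yv_zero: "yv D x 0 i = x i"
proof -
  have "yv D x 0 i = cf D x 0 i" unfolding yv_series using powser_zero[of "\<lambda>k. cf D x k i"] by simp
  also have "\<dots> = x i" unfolding cf_def
  proof -
    have "\<And>j. mat_pow D 0 i j * x j = (if i = j then x j else 0)" by simp
    then show "(\<Sum>j\<in>UNIV. mat_pow D 0 i j * x j) / fact 0 = x i" by simp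
  qed
  finally show ?thesis .
qed

lemma yv_colsum:
  assumes "\<And>j. (\<Sum>i\<in>UNIV. D i j) = 0" and "(\<Sum>i\<in>UNIV. x i) = 0"
  shows "(\<Sum>i\<in>UNIV. yv D x t i) = 0"
proof -
  have z: "(\<Sum>i\<in>UNIV. cf D x k i * t^k) = 0" for k
  proof -
    have "(\<Sum>i\<in>UNIV. \<Sum>j\<in>UNIV. mat_pow D k i j * x j) = (\<Sum>j\<in>UNIV. (\<Sum>i\<in>UNIV. mat_pow D k i j) * x j)"
      by (simp add: sum_distrib_right) (rule sum.swap)
    also have "\<dots> = 0"
    proof (cases k)
      case 0
      have "\<And>j. (\<Sum>i\<in>UNIV. mat_pow D 0 i j) = 1"
      proof -
        fix j
        have "\<And>i. mat_pow D 0 i j = (if i = j then 1 else 0)" by simp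
        then show "(\<Sum>i\<in>UNIV. mat_pow D 0 i j) = 1" by simp
      qed
      then show ?thesis using 0 assms(2) by simp
    next
      case (Suc m) then show ?thesis using mat_pow_colsum[OF assms(1)] by simp
    qed
    moreover have "(\<Sum>i\<in>UNIV. cf D x k i * t^k) = (t^k / fact k) * (\<Sum>i\<in>UNIV. \<Sum>j\<in>UNIV. mat_pow D k i j * x j)"
    proof -
      have "\<And>i. cf D x k i * t^k = (t^k / fact k) * (\<Sum>j\<in>UNIV. mat_pow D k i j * x j)"
        unfolding cf_def by simp
      then have "(\<Sum>i\<in>UNIV. cf D x k i * t^k) = (\<Sum>i\<in>UNIV. (t^k / fact k) * (\<Sum>j\<in>UNIV. mat_pow D k i j * x j))"
        by simp
      also have "\<dots> = (t^k / fact k) * (\<Sum>i\<in>UNIV. \<Sum>j\<in>UNIV. mat_pow D k i j * x j)"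
        by (rule sum_distrib_left[symmetric])
      finally show ?thesis .
    qed
    ultimately show ?thesis by simp
  qed
  have "(\<Sum>i\<in>UNIV. yv D x t i) = (\<Sum>k. \<Sum>i\<in>UNIV. cf D x k i * t^k)"
    unfolding yv_series by (rule suminf_sum[symmetric]) (rule summable_cf)
  also have "\<dots> = 0" using z by simp
  finally show ?thesis .
qed

lemma yv_deriv: "((\<lambda>t. yv D x t i) has_real_derivative (\<Sum>l\<in>UNIV. D i l * yv D x t l)) (at t)"
proof -
  have d: "((\<lambda>t. \<Sum>k. cf D x k i * t^k) has_real_derivative (\<Sum>k. diffs (\<lambda>k. cf D x k i) k * t^k)) (at t)"
    by (rule termdiffs_strong_converges_everywhere) (rule summable_cf)
  have e: "diffs (\<lambda>k. cf D x k i) k * t^k = (\<Sum>l\<in>UNIV. D i l * (cf D x k l * t^k))" for k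
  proof -
    have "diffs (\<lambda>k. cf D x k i) k = of_nat (Suc k) * ((\<Sum>l\<in>UNIV. D i l * (\<Sum>j\<in>UNIV. mat_pow D k l j * x j)) / fact (Suc k))"
      unfolding diffs_def cf_def mat_pow_vec_Suc ..
    also have "\<dots> = (\<Sum>l\<in>UNIV. D i l * (\<Sum>j\<in>UNIV. mat_pow D k l j * x j)) / fact k"
      by (simp add: fact_Suc del: of_nat_Suc)
    finally have 1: "diffs (\<lambda>k. cf D x k i) k = (\<Sum>l\<in>UNIV. D i l * (\<Sum>j\<in>UNIV. mat_pow D k l j * x j)) / fact k" .
    have 2: "(\<Sum>l\<in>UNIV. D i l * (cf D x k l * t^k)) = (\<Sum>l\<in>UNIV. D i l * (\<Sum>j\<in>UNIV. mat_pow D k l j * x j)) / fact k * t^k"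
    proof -
      have "\<And>l. D i l * (cf D x k l * t^k) = (D i l * (\<Sum>j\<in>UNIV. mat_pow D k l j * x j)) * (t^k / fact k)"
        unfolding cf_def by simp
      then have "(\<Sum>l\<in>UNIV. D i l * (cf D x k l * t^k)) = (\<Sum>l\<in>UNIV. (D i l * (\<Sum>j\<in>UNIV. mat_pow D k l j * x j)) * (t^k / fact k))"
        by simp
      also have "\<dots> = (\<Sum>l\<in>UNIV. D i l * (\<Sum>j\<in>UNIV. mat_pow D k l j * x j)) * (t^k / fact k)"
        by (rule sum_distrib_right[symmetric])
      finally show ?thesis by simp
    qed
    show ?thesis unfolding 1 2 ..
  qed
  have "(\<Sum>k. diffs (\<lambda>k. cf D x k i) k * t^k) = (\<Sum>k. \<Sum>l\<in>UNIV. D i l * (cf D x k l * t^k))"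
    unfolding e ..
  also have "\<dots> = (\<Sum>l\<in>UNIV. \<Sum>k. D i l * (cf D x k l * t^k))"
    by (rule suminf_sum) (rule summable_mult, rule summable_cf)
  also have "\<dots> = (\<Sum>l\<in>UNIV. D i l * yv D x t l)"
    unfolding yv_series by (rule sum.cong[OF refl]) (rule suminf_mult, rule summable_cf)
  finally have "(\<Sum>k. diffs (\<lambda>k. cf D x k i) k * t^k) = (\<Sum>l\<in>UNIV. D i l * yv D x t l)" .
  moreover have "(\<lambda>t. yv D x t i) = (\<lambda>t. \<Sum>k. cf D x k i * t^k)" by (simp add: fun_eq_iff yv_series)
  ultimately show ?thesis using d by simp
qed



context lap begin

abbreviation "D \<equiv> (\<lambda>a b. - A a b)"

lemma D_col: "(\<Sum>i\<in>UNIV. D i j) = 0"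
  using A_col[of j] by (simp add: sum_negf)

lemma decay:
  obtains c :: real where "c > 0" and
    "\<And>x t. (\<Sum>i\<in>UNIV. x i) = 0 \<Longrightarrow> t \<ge> 0 \<Longrightarrow>
       (\<Sum>i\<in>UNIV. yv D x t i * yv D x t i) \<le> exp (- (2 * c * t)) * (\<Sum>i\<in>UNIV. x i * x i)"
proof -
  obtain c where c: "c > 0" and lw: "\<And>x. (\<Sum>i\<in>UNIV. x i) = 0 \<Longrightarrow>
     c * (\<Sum>i\<in>UNIV. (x i)^2) \<le> (\<Sum>i\<in>UNIV. (\<Sum>j\<in>UNIV. L i j * x j)^2)"
    using lower by blast
  have main: "(\<Sum>i\<in>UNIV. yv D x t i * yv D x t i) \<le> exp (- (2 * c * t)) * (\<Sum>i\<in>UNIV. x i * x i)"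
    if sx: "(\<Sum>i\<in>UNIV. x i) = 0" and t: "t \<ge> 0" for x t
  proof -
    define g where "g s = (\<Sum>i\<in>UNIV. yv D x s i * yv D x s i)" for s
    define g' where "g' s = (\<Sum>i\<in>UNIV. (\<Sum>l\<in>UNIV. D i l * yv D x s l) * yv D x s i
                        + (\<Sum>l\<in>UNIV. D i l * yv D x s l) * yv D x s i)" for s
    have dg: "(g has_real_derivative g' s) (at s)" for s
      unfolding g_def g'_def
      by (rule DERIV_sum, rule DERIV_mult, rule yv_deriv, rule yv_deriv)
    have g'le: "g' s \<le> - (2 * c) * g s" for s
    proof -
      let ?y = "\<lambda>i. yv D x s i"
      have "g' s = - 2 * (\<Sum>i\<in>UNIV. ?y i * (\<Sum>l\<in>UNIV. A i l * ?y l))"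
        unfolding g'_def by (simp add: sum_negf sum_distrib_left mult_ac)
      also have "\<dots> = - 2 * (\<Sum>k\<in>UNIV. (\<Sum>l\<in>UNIV. L k l * ?y l)^2)" by (simp only: A_form)
      also have "\<dots> \<le> - 2 * (c * (\<Sum>i\<in>UNIV. (?y i)^2))"
        using lw[OF yv_colsum[OF D_col sx]] by simp
      also have "\<dots> = - (2 * c) * g s" by (simp add: g_def power2_eq_square)
      finally show ?thesis .
    qed
    define h where "h s = exp (2 * c * s) * g s" for s
    have dh: "(h has_real_derivative (exp (2 * c * s) * (2 * c) * g s + g' s * exp (2 * c * s))) (at s)" for s
      unfolding h_def
      by (rule DERIV_mult[OF DERIV_fun_exp dg]) (auto intro!: derivative_eq_intros)
    have "h t \<le> h 0"
    proof (rule DERIV_nonpos_imp_nonincreasing[OF t])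
      fix s
      have "exp (2 * c * s) * (2 * c) * g s + g' s * exp (2 * c * s) \<le> 0"
      proof -
        have "g' s * exp (2 * c * s) \<le> (- (2 * c) * g s) * exp (2 * c * s)"
          using g'le[of s] by (intro mult_right_mono) auto
        then show ?thesis by (simp add: algebra_simps)
      qed
      then show "\<exists>y. DERIV h s :> y \<and> y \<le> 0" using dh by blast
    qed
    moreover have "h 0 = (\<Sum>i\<in>UNIV. x i * x i)" by (simp add: h_def g_def yv_zero)
    ultimately have "exp (2 * c * t) * g t \<le> (\<Sum>i\<in>UNIV. x i * x i)" by (simp add: h_def)
    then have "exp (- (2 * c * t)) * (exp (2 * c * t) * g t) \<le> exp (- (2 * c * t)) * (\<Sum>i\<in>UNIV. x i * x i)"
      by (intro mult_left_mono) auto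
    then show ?thesis by (simp add: g_def exp_minus field_simps)
  qed
  show ?thesis using that[OF c main] by blast
qed

end


context lap begin

lemma entries:
  "\<exists>t0>0. \<forall>t\<ge>t0. \<forall>i j. mat_exp (\<lambda>i j. - t * mat_pow L 2 i j) i j > 0"
proof -
  obtain c :: real where c: "c > 0" and dec: "\<And>x t. (\<Sum>i\<in>UNIV. x i) = 0 \<Longrightarrow> t \<ge> 0 \<Longrightarrow>
       (\<Sum>i\<in>UNIV. yv D x t i * yv D x t i) \<le> exp (- (2 * c * t)) * (\<Sum>i\<in>UNIV. x i * x i)"
    using decay by blast
  define n where "n = real CARD('v)"
  have n: "n \<ge> 1" unfolding n_def by (simp add: Suc_leI)
  define t0 where "t0 = n^3 / (2 * c) + 1"
  have t0: "t0 > 0" unfolding t0_def using c n by (simp add: add_pos_nonneg)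
  have "\<forall>t\<ge>t0. \<forall>i j. mat_exp (\<lambda>i j. - t * mat_pow L 2 i j) i j > 0"
  proof (intro allI impI)
    fix t i j0 assume tt: "t \<ge> t0"
    let ?M = "mat_exp (\<lambda>i j. - t * mat_pow L 2 i j)"
    have eqM: "(\<lambda>i j. - t * mat_pow L 2 i j) = (\<lambda>a b. t * D a b)" by (simp add: fun_eq_iff)
    define x :: "'v \<Rightarrow> real" where "x l = (if l = j0 then 1 else 0) - 1 / n" for l
    have sx: "(\<Sum>l\<in>UNIV. x l) = 0"
      unfolding x_def by (simp add: sum_subtractf n_def)
    have rs: "(\<Sum>l\<in>UNIV. ?M i l) = 1"
      by (rule mat_exp_rowsum) (simp add: sum_negf sum_distrib_left[symmetric] A_row)
    have "yv D x t i = (\<Sum>l\<in>UNIV. ?M i l * x l)" unfolding yv_def eqM ..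
    also have "\<dots> = ?M i j0 - (\<Sum>l\<in>UNIV. ?M i l) / n"
    proof -
      have "\<And>l. ?M i l * (if l = j0 then 1 else 0) = (if l = j0 then ?M i l else 0)" by simp
      then show ?thesis unfolding x_def by (simp add: right_diff_distrib sum_subtractf sum_divide_distrib)
    qed
    finally have yi: "yv D x t i = ?M i j0 - 1 / n" using rs by simp
    have "(yv D x t i)^2 \<le> (\<Sum>i\<in>UNIV. yv D x t i * yv D x t i)"
      using member_le_sum[of i UNIV "\<lambda>i. yv D x t i * yv D x t i"] by (simp add: power2_eq_square)
    also have "\<dots> \<le> exp (- (2 * c * t)) * (\<Sum>l\<in>UNIV. x l * x l)"
      using dec[OF sx] t0 tt by simp
    also have "\<dots> \<le> exp (- (2 * c * t)) * n"
    proof (rule mult_left_mono)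
      have "\<And>l. x l * x l \<le> 1"
      proof -
        fix l
        have "0 \<le> 1 / n" "1 / n \<le> 1" using n by auto
        then have "\<bar>x l\<bar> \<le> 1" unfolding x_def by auto
        then show "x l * x l \<le> 1" by (metis abs_ge_zero mult_le_one abs_mult_self_eq)
      qed
      then have "(\<Sum>l\<in>UNIV. x l * x l) \<le> (\<Sum>l\<in>(UNIV::'v set). 1)" by (intro sum_mono) auto
      then show "(\<Sum>l\<in>UNIV. x l * x l) \<le> n" by (simp add: n_def)
    qed simp
    also have "\<dots> < 1 / n^2"
    proof -
      have "2 * c * t \<ge> n^3 + 2 * c" using tt c unfolding t0_def by (simp add: field_simps)
      moreover have "exp (2 * c * t) \<ge> 1 + 2 * c * t" by (rule exp_ge_add_one_self)
      ultimately have big: "exp (2 * c * t) > n^3" using c by linarith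
      have "exp (- (2 * c * t)) * n = n / exp (2 * c * t)" by (simp add: exp_minus field_simps)
      also have "\<dots> < n / n^3" using big n by (intro divide_strict_left_mono) auto
      also have "\<dots> = 1 / n^2" using n by (simp add: power3_eq_cube power2_eq_square)
      finally show ?thesis .
    qed
    finally have "(?M i j0 - 1 / n)^2 < (1 / n)^2" using yi by (simp add: power_divide)
    then have "\<bar>?M i j0 - 1 / n\<bar> < 1 / n" using power2_less_imp_less[of "\<bar>?M i j0 - 1 / n\<bar>" "1 / n"] n by simp
    then show "?M i j0 > 0" by linarith
  qed
  then show ?thesis using t0 by blast
qed

end

theorem proposition6p7:
  fixes E :: "'v::finite \<Rightarrow> 'v \<Rightarrow> bool" and Eo :: "('v \<times> 'v) set"
  assumes "simple_graph E" and "connected_graph E" and "orientation E Eo"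
  shows "\<exists>t0>0. \<forall>t\<ge>t0.
     let M = mat_exp (\<lambda>i j. - t * mat_pow (laplacian Eo) 2 i j) in
       (\<forall>f::'v \<Rightarrow> complex. (\<forall>v. f v \<in> \<real> \<and> 0 \<le> Re (f v)) \<longrightarrow>
            (\<forall>v. mat_vec M f v \<in> \<real> \<and> 0 \<le> Re (mat_vec M f v))) \<and>
       (\<forall>f::'v \<Rightarrow> complex. sup_norm (mat_vec M f) \<le> sup_norm f)"
proof -
  interpret lap E Eo using assms by unfold_locales
  obtain t0 where t0: "t0 > 0" and pos: "\<And>t i j. t \<ge> t0 \<Longrightarrow> mat_exp (\<lambda>i j. - t * mat_pow (laplacian Eo) 2 i j) i j > 0"
    using entries by blast
  show ?thesis
  proof (intro exI[of _ t0] conjI allI impI, fact t0)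
    fix t assume tt: "t \<ge> t0"
    define M where "M = mat_exp (\<lambda>i j. - t * mat_pow (laplacian Eo) 2 i j)"
    have Mpos: "\<And>i j. M i j > 0" using pos[OF tt] unfolding M_def .
    have rs: "\<And>i. (\<Sum>l\<in>UNIV. M i l) = 1" unfolding M_def
      by (rule mat_exp_rowsum) (simp add: sum_negf sum_distrib_left[symmetric] A_row)
    have P1: "\<forall>f::'v \<Rightarrow> complex. (\<forall>v. f v \<in> \<real> \<and> 0 \<le> Re (f v)) \<longrightarrow>
            (\<forall>v. mat_vec M f v \<in> \<real> \<and> 0 \<le> Re (mat_vec M f v))"
    proof (intro allI impI conjI)
      fix f :: "'v \<Rightarrow> complex" and v assume f: "\<forall>v. f v \<in> \<real> \<and> 0 \<le> Re (f v)"
      show "mat_vec M f v \<in> \<real>" unfolding mat_vec_def using f by auto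
      show "0 \<le> Re (mat_vec M f v)" unfolding mat_vec_def using f Mpos
        by (auto intro!: sum_nonneg simp: less_imp_le)
    qed
    have P2: "\<forall>f::'v \<Rightarrow> complex. sup_norm (mat_vec M f) \<le> sup_norm f"
    proof
      fix f :: "'v \<Rightarrow> complex"
      have fb: "\<And>j. cmod (f j) \<le> sup_norm f" unfolding sup_norm_def by (rule Max_ge) auto
      have "\<And>v. cmod (mat_vec M f v) \<le> sup_norm f"
      proof -
        fix v
        have "cmod (mat_vec M f v) \<le> (\<Sum>j\<in>UNIV. cmod (complex_of_real (M v j) * f j))"
          unfolding mat_vec_def by (rule norm_sum)
        also have "\<dots> = (\<Sum>j\<in>UNIV. M v j * cmod (f j))"
          using Mpos by (simp add: norm_mult less_imp_le)
        also have "\<dots> \<le> (\<Sum>j\<in>UNIV. M v j * sup_norm f)"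
          using Mpos fb by (intro sum_mono mult_left_mono) (auto simp: less_imp_le)
        also have "\<dots> = sup_norm f" using rs[of v] by (simp add: sum_distrib_right[symmetric])
        finally show "cmod (mat_vec M f v) \<le> sup_norm f" .
      qed
      then show "sup_norm (mat_vec M f) \<le> sup_norm f"
        unfolding sup_norm_def[of "mat_vec M f"] by (intro Max.boundedI) auto
    qed
    show "let M = mat_exp (\<lambda>i j. - t * mat_pow (laplacian Eo) 2 i j) in
       (\<forall>f::'v \<Rightarrow> complex. (\<forall>v. f v \<in> \<real> \<and> 0 \<le> Re (f v)) \<longrightarrow>
            (\<forall>v. mat_vec M f v \<in> \<real> \<and> 0 \<le> Re (mat_vec M f v))) \<and>
       (\<forall>f::'v \<Rightarrow> complex. sup_norm (mat_vec M f) \<le> sup_norm f)"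
      unfolding Let_def M_def[symmetric] using P1 P2 by blast
  qed
qed

end
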